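(* Let $\mathcal V=\{[x^{q^4+q^2+1},\,x^{q^3+q+1},\,x^{q^4+q+1}] : x\in\mathbb F_{q^6}\setminus\{0\}\}$, the $\langle\phi_3\rangle$-orbit of $[1,1,1]$. Then no four distinct points of $\mathcal V$ are contained in a plane of $\mathrm{PG}(U_3)\cong\mathrm{PG}(13,q)$ (i.e. $\mathcal V$ is a $4$-general set).
   Context: $q$ is a prime power and $\omega$ is a primitive element of $\mathbb F_{q^6}$. Let $U_3=\mathbb F_{q^2}\times\mathbb F_{q^6}\times\mathbb F_{q^6}$, a $14$-dimensional $\mathbb F_q$-vector space (note $x^{q^4+q^2+1}\in\mathbb F_{q^2}$ for $x\in\mathbb F_{q^6}$), so $\mathrm{PG}(U_3)\cong\mathrm{PG}(13,q)$; write $[a,b,c]$ for the point spanned by $(a,b,c)\ne 0$. Let $\phi_3$ be the projectivity of $\mathrm{PG}(U_3)$ induced by the $\mathbb F_q$-linear map $(a,b,c)\mapsto(\omega^{q^4+q^2+1}a,\ \omega^{q^3+q+1}b,\ \omega^{q^4+q+1}c)$. A $4$-general set is a set of points any four of which are in general position (no four in a plane), spanning the space, with some solid containing five of its points. *)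

theory Defs
  imports "HOL-Computational_Algebra.Primes"
begin

text \<open>The field F_{q^6} is a finite field type 'a with CARD('a) = q^6.
  Subfields: F_q = {c. c^q = c}, F_{q^2} = {c. c^(q^2) = c}.\<close>

definition Fq :: "nat \<Rightarrow> 'a::{finite,field} set" where
  "Fq q = {c. c ^ q = c}"

definition Fq2 :: "nat \<Rightarrow> 'a::{finite,field} set" where
  "Fq2 q = {c. c ^ (q^2) = c}"

type_synonym 'a vec3 = "'a \<times> 'a \<times> 'a"

definition U3 :: "nat \<Rightarrow> ('a::{finite,field}) vec3 set" where
  "U3 q = Fq2 q \<times> UNIV \<times> UNIV"

definition vzero :: "('a::field) vec3" where
  "vzero = (0, 0, 0)"

definition vadd :: "('a::field) vec3 \<Rightarrow> 'a vec3 \<Rightarrow> 'a vec3" where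
  "vadd u w = (fst u + fst w, fst (snd u) + fst (snd w), snd (snd u) + snd (snd w))"

definition vsc :: "'a::field \<Rightarrow> 'a vec3 \<Rightarrow> 'a vec3" where
  "vsc c u = (c * fst u, c * fst (snd u), c * snd (snd u))"

definition point :: "nat \<Rightarrow> ('a::{finite,field}) vec3 \<Rightarrow> 'a vec3 set" where
  "point q u = {vsc c u | c. c \<in> Fq q}"

definition indep3 :: "nat \<Rightarrow> ('a::{finite,field}) vec3 \<Rightarrow> 'a vec3 \<Rightarrow> 'a vec3 \<Rightarrow> bool" where
  "indep3 q w1 w2 w3 \<longleftrightarrow>
     (\<forall>a\<in>Fq q. \<forall>b\<in>Fq q. \<forall>c\<in>Fq q.
        vadd (vsc a w1) (vadd (vsc b w2) (vsc c w3)) = vzero \<longrightarrow> a = 0 \<and> b = 0 \<and> c = 0)"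

definition is_plane :: "nat \<Rightarrow> ('a::{finite,field}) vec3 set \<Rightarrow> bool" where
  "is_plane q \<Pi> \<longleftrightarrow> (\<exists>w1\<in>U3 q. \<exists>w2\<in>U3 q. \<exists>w3\<in>U3 q. indep3 q w1 w2 w3 \<and>
      \<Pi> = {vadd (vsc a w1) (vadd (vsc b w2) (vsc c w3)) | a b c.
              a \<in> Fq q \<and> b \<in> Fq q \<and> c \<in> Fq q})"

definition vV :: "nat \<Rightarrow> 'a::{finite,field} \<Rightarrow> 'a vec3" where
  "vV q x = (x ^ (q^4 + q^2 + 1), x ^ (q^3 + q + 1), x ^ (q^4 + q + 1))"

definition Vpts :: "nat \<Rightarrow> ('a::{finite,field}) vec3 set set" where
  "Vpts q = {point q (vV q x) | x. x \<noteq> 0}"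

end

theory Submission
  imports Defs
begin


lemma of_nat_card_zero: "of_nat (card (UNIV :: 'a::{finite,comm_ring_1} set)) = (0::'a)"
proof -
  have "(\<Sum>x\<in>(UNIV::'a set). x + 1) = (\<Sum>x\<in>UNIV. x)"
    by (rule sum.reindex_bij_witness[of _ "\<lambda>y. y - 1" "\<lambda>y. y + 1"]) auto
  moreover have "(\<Sum>x\<in>(UNIV::'a set). x + 1) = (\<Sum>x\<in>UNIV. x) + of_nat (card (UNIV::'a set))"
    by (simp add: sum.distrib)
  ultimately show ?thesis by simp
qed

lemma CHAR_dvd_card: "CHAR('a::{finite,comm_ring_1}) dvd card (UNIV :: 'a set)"
  using of_nat_card_zero[where 'a='a] of_nat_eq_0_iff_char_dvd by blast


lemma card_pow_same:
  fixes x :: "'a::{finite,field}"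
  shows "x ^ card (UNIV :: 'a set) = x"
proof (cases "x = 0")
  case False
  have "x * (\<Prod>y\<in>UNIV-{0}. x * y) = x * x ^ (card (UNIV :: 'a set) - 1) * \<Prod>(UNIV-{0})"
    by (simp add: prod.distrib mult_ac)
  also have "x * x ^ (card (UNIV :: 'a set) - 1) = x ^ Suc (card (UNIV :: 'a set) - 1)"
    by (subst power_Suc) auto
  also have "Suc (card (UNIV :: 'a set) - 1) = card (UNIV :: 'a set)"
    using finite_UNIV_card_ge_0[where ?'a = 'a] by simp
  also have "(\<Prod>y\<in>UNIV-{0}. x * y) = (\<Prod>y\<in>UNIV-{0}. y)"
    by (rule prod.reindex_bij_witness[of _ "\<lambda>y. y / x" "\<lambda>y. x * y"]) (use False in auto)
  finally show ?thesis
    by simp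
qed (use finite_UNIV_card_ge_0[where ?'a = 'a] in auto)

lemma setup_facts:
  fixes q :: nat
  assumes "\<exists>p n. prime p \<and> n > 0 \<and> q = p ^ n"
    and "card (UNIV :: 'a::{finite,field} set) = q ^ 6"
  shows "\<forall>k (x::'a) y. (x + y) ^ (q ^ k) = x ^ (q ^ k) + y ^ (q ^ k)"
    and "\<forall>x::'a. x ^ (q ^ 6) = x"
proof -
  obtain p n where pn: "prime p" "n > 0" "q = p ^ n" using assms(1) by blast
  have cp: "CHAR('a) > 0" by (rule finite_imp_CHAR_pos) simp
  have pr: "prime CHAR('a)" using prime_CHAR_semidom[OF cp] .
  have "CHAR('a) dvd p ^ (n * 6)" using CHAR_dvd_card[where 'a='a] assms(2) pn
    by (simp add: power_mult)
  hence "CHAR('a) dvd p" using pr prime_dvd_power by blast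
  hence cq: "CHAR('a) = p" using pr pn(1) by (simp add: primes_dvd_imp_eq)
  show "\<forall>k (x::'a) y. (x + y) ^ (q ^ k) = x ^ (q ^ k) + y ^ (q ^ k)"
  proof (intro allI)
    fix k and x y :: 'a
    show "(x + y) ^ (q ^ k) = x ^ (q ^ k) + y ^ (q ^ k)"
      by (rule freshmans_dream'[OF pr, where n="n*k"]) (simp add: cq pn(3) power_mult)
  qed
  show "\<forall>x::'a. x ^ (q ^ 6) = x" using card_pow_same assms(2) by metis
qed



definition fr :: "nat \<Rightarrow> nat \<Rightarrow> 'a::field \<Rightarrow> 'a" where "fr q k z = z ^ (q ^ k)"

definition Phi :: "nat \<Rightarrow> 'a::field \<Rightarrow> 'a \<Rightarrow> 'a \<Rightarrow> 'a vec3 \<Rightarrow> 'a" where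
 "Phi q al be ga v = al*be*ga*fst v - al*be*fr q 5 (fst (snd v)) - al*ga*fr q 3 (fst (snd v))
    + al*fr q 5 (snd (snd v)) - be*ga*fr q 1 (fst (snd v)) + be*fr q 1 (snd (snd v))
    + ga*fr q 3 (snd (snd v)) - fr q 1 (fst v)"

lemma fr_add:
  assumes F: "\<forall>k (x::'a::field) y. (x + y) ^ (q ^ k) = x ^ (q ^ k) + y ^ (q ^ k)"
  shows "fr q k (x + y) = fr q k x + fr q k (y::'a)"
  using F unfolding fr_def by blast

lemma fr_mult: "fr q k (x * y) = fr q k x * fr q k (y::'a::field)"
  unfolding fr_def by (simp add: power_mult_distrib)

lemma fr_diff:
  assumes F: "\<forall>k (x::'a::field) y. (x + y) ^ (q ^ k) = x ^ (q ^ k) + y ^ (q ^ k)"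
  shows "fr q k (x - y) = fr q k x - fr q k (y::'a)"
proof -
  have "fr q k (x - y + y) = fr q k (x - y) + fr q k y" using fr_add[OF F] by blast
  thus ?thesis by simp
qed

lemma fr_Fq: assumes "c ^ q = (c::'a::field)" shows "fr q k c = c"
proof (induction k)
  case 0 thus ?case by (simp add: fr_def)
next
  case (Suc k)
  have "c ^ (q ^ Suc k) = (c ^ q) ^ (q ^ k)" by (simp add: power_mult)
  thus ?case using Suc assms by (simp add: fr_def)
qed

lemma pow_q6t:
  assumes P: "\<forall>x::'a::field. x ^ (q ^ 6) = x"
  shows "(y::'a) ^ ((q ^ 6) ^ t) = y"
proof (induction t)
  case 0 thus ?case by simp
next
  case (Suc t)
  have "y ^ ((q ^ 6) ^ Suc t) = (y ^ ((q ^ 6) ^ t)) ^ (q ^ 6)"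
    by (simp add: power_mult[symmetric] mult.commute)
  thus ?case using Suc P by simp
qed

lemma Xmod:
  assumes P: "\<forall>x::'a::field. x ^ (q ^ 6) = x"
  shows "(x::'a) ^ (q ^ m) = x ^ (q ^ (m mod 6))"
proof -
  have "q ^ m = q ^ (m mod 6) * (q ^ 6) ^ (m div 6)"
    by (metis mod_mult_div_eq power_add power_mult)
  hence "x ^ (q ^ m) = (x ^ (q ^ (m mod 6))) ^ ((q ^ 6) ^ (m div 6))"
    by (simp add: power_mult)
  thus ?thesis using pow_q6t[OF P] by simp
qed

lemma frX:
  assumes P: "\<forall>x::'a::field. x ^ (q ^ 6) = x"
  shows "fr q k ((x::'a) ^ (q ^ a)) = x ^ (q ^ ((a + k) mod 6))"
proof -
  have "(x^(q^a))^(q^k) = x^(q^(a+k))" by (simp only: power_mult[symmetric] power_add)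
  thus ?thesis using Xmod[OF P, of x "a+k"] unfolding fr_def by simp
qed

lemma fr_shape1:
  assumes P: "\<forall>x::'a::field. x ^ (q ^ 6) = x"
    and "a' = (a + k) mod 6" "b' = (b + k) mod 6" "k' = k mod 6"
  shows "fr q k ((x::'a) ^ (q ^ a + q ^ b + 1)) = x ^ (q ^ a') * x ^ (q ^ b') * x ^ (q ^ k')"
proof -
  have "(x::'a) ^ (q ^ a + q ^ b + 1) = x ^ (q ^ a) * x ^ (q ^ b) * x ^ (q ^ 0)"
    by (simp add: power_add)
  thus ?thesis using assms(2-4) by (simp only: fr_mult frX[OF P]) simp
qed

lemma fr_shape2:
  assumes P: "\<forall>x::'a::field. x ^ (q ^ 6) = x"
    and "a' = (a + k) mod 6" "b' = (1 + k) mod 6" "k' = k mod 6"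
  shows "fr q k ((x::'a) ^ (q ^ a + q + 1)) = x ^ (q ^ a') * x ^ (q ^ b') * x ^ (q ^ k')"
  using fr_shape1[OF P assms(2-4), of x] by simp

lemma alg8:
  fixes al be ga X0 X1 X2 X3 X4 X5 :: "'a::comm_ring_1"
  shows "al*be*ga*(X4*X2*X0) - al*be*(X2*X0*X5) - al*ga*(X0*X4*X3)
    + al*(X3*X0*X5) - be*ga*(X4*X2*X1) + be*(X5*X2*X1)
    + ga*(X1*X4*X3) - (X5*X3*X1) = (al*X0 - X1)*(be*X2 - X3)*(ga*X4 - X5)"
  by (simp add: ring_distribs mult_ac add_ac)

lemma Phi_vV:
  assumes P: "\<forall>x::'a::{finite,field}. x ^ (q ^ 6) = x"
  shows "Phi q al be ga (vV q (x::'a)) =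
     (al*x - x^q)*(be*x^(q^2) - x^(q^3))*(ga*x^(q^4) - x^(q^5))"
proof -
  have e1: "fst (vV q x) = x^(q^4)*x^(q^2)*x^(q^0)" by (simp add: vV_def power_add)
  have e2: "fr q 1 (fst (vV q x)) = x^(q^5)*x^(q^3)*x^(q^1)"
    unfolding vV_def prod.sel by (rule fr_shape1[OF P]) simp_all
  have e3: "fr q 5 (fst (snd (vV q x))) = x^(q^2)*x^(q^0)*x^(q^5)"
    unfolding vV_def prod.sel by (rule fr_shape2[OF P]) simp_all
  have e4: "fr q 3 (fst (snd (vV q x))) = x^(q^0)*x^(q^4)*x^(q^3)"
    unfolding vV_def prod.sel by (rule fr_shape2[OF P]) simp_all
  have e5: "fr q 1 (fst (snd (vV q x))) = x^(q^4)*x^(q^2)*x^(q^1)"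
    unfolding vV_def prod.sel by (rule fr_shape2[OF P]) simp_all
  have e6: "fr q 5 (snd (snd (vV q x))) = x^(q^3)*x^(q^0)*x^(q^5)"
    unfolding vV_def prod.sel by (rule fr_shape2[OF P]) simp_all
  have e7: "fr q 1 (snd (snd (vV q x))) = x^(q^5)*x^(q^2)*x^(q^1)"
    unfolding vV_def prod.sel by (rule fr_shape2[OF P]) simp_all
  have e8: "fr q 3 (snd (snd (vV q x))) = x^(q^1)*x^(q^4)*x^(q^3)"
    unfolding vV_def prod.sel by (rule fr_shape2[OF P]) simp_all
  have "Phi q al be ga (vV q x) = (al*x^(q^0) - x^(q^1))*(be*x^(q^2) - x^(q^3))*(ga*x^(q^4) - x^(q^5))"
    unfolding Phi_def e2 e3 e4 e5 e6 e7 e8 unfolding e1 by (rule alg8)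
  thus ?thesis by simp
qed


definition dot3 :: "'a::comm_ring_1 \<Rightarrow> 'a \<Rightarrow> 'a \<Rightarrow> 'a \<Rightarrow> 'a \<Rightarrow> 'a \<Rightarrow> 'a" where
  "dot3 a b c x y z = a*x + b*y + c*z"
definition det3 :: "'a::comm_ring_1 \<Rightarrow> 'a \<Rightarrow> 'a \<Rightarrow> 'a \<Rightarrow> 'a \<Rightarrow> 'a \<Rightarrow> 'a \<Rightarrow> 'a \<Rightarrow> 'a \<Rightarrow> 'a" where
  "det3 a b c d e f g h i = a*(e*i - f*h) - b*(d*i - f*g) + c*(d*h - e*g)"

lemma det3_mul:
  fixes r11 r12 r13 r21 r22 r23 r31 r32 r33 g11 g12 g13 g21 g22 g23 g31 g32 g33 :: "'a::comm_ring_1"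
  shows "det3 r11 r12 r13 r21 r22 r23 r31 r32 r33 * det3 g11 g12 g13 g21 g22 g23 g31 g32 g33 =
    det3 (dot3 r11 r12 r13 g11 g21 g31) (dot3 r11 r12 r13 g12 g22 g32) (dot3 r11 r12 r13 g13 g23 g33)
         (dot3 r21 r22 r23 g11 g21 g31) (dot3 r21 r22 r23 g12 g22 g32) (dot3 r21 r22 r23 g13 g23 g33)
         (dot3 r31 r32 r33 g11 g21 g31) (dot3 r31 r32 r33 g12 g22 g32) (dot3 r31 r32 r33 g13 g23 g33)"
  unfolding det3_def dot3_def by (simp add: algebra_simps)

lemma cramer:
  fixes r41 r42 r43 g11 g12 g13 g14 g21 g22 g23 g24 g31 g32 g33 g34 :: "'a::comm_ring_1"
  shows "det3 g11 g12 g13 g21 g22 g23 g31 g32 g33 * dot3 r41 r42 r43 g14 g24 g34 =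
     det3 g14 g12 g13 g24 g22 g23 g34 g32 g33 * dot3 r41 r42 r43 g11 g21 g31
   + det3 g11 g14 g13 g21 g24 g23 g31 g34 g33 * dot3 r41 r42 r43 g12 g22 g32
   + det3 g11 g12 g14 g21 g22 g24 g31 g32 g34 * dot3 r41 r42 r43 g13 g23 g33"
  unfolding det3_def dot3_def by (simp add: algebra_simps)


lemma no4:
  fixes r11 r12 r13 r21 r22 r23 r31 r32 r33 r41 r42 r43 :: "'a::field"
    and g11 g12 g13 g14 g21 g22 g23 g24 g31 g32 g33 g34 :: 'a
  assumes "dot3 r11 r12 r13 g11 g21 g31 \<noteq> 0" "dot3 r11 r12 r13 g12 g22 g32 = 0"
    "dot3 r11 r12 r13 g13 g23 g33 = 0"
    "dot3 r21 r22 r23 g11 g21 g31 = 0" "dot3 r21 r22 r23 g12 g22 g32 \<noteq> 0"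
    "dot3 r21 r22 r23 g13 g23 g33 = 0"
    "dot3 r31 r32 r33 g11 g21 g31 = 0" "dot3 r31 r32 r33 g12 g22 g32 = 0"
    "dot3 r31 r32 r33 g13 g23 g33 \<noteq> 0"
    "dot3 r41 r42 r43 g11 g21 g31 = 0" "dot3 r41 r42 r43 g12 g22 g32 = 0"
    "dot3 r41 r42 r43 g13 g23 g33 = 0" "dot3 r41 r42 r43 g14 g24 g34 \<noteq> 0"
  shows False
proof -
  have "det3 r11 r12 r13 r21 r22 r23 r31 r32 r33 * det3 g11 g12 g13 g21 g22 g23 g31 g32 g33
     = dot3 r11 r12 r13 g11 g21 g31 * dot3 r21 r22 r23 g12 g22 g32 * dot3 r31 r32 r33 g13 g23 g33"
    unfolding det3_mul using assms by (simp add: det3_def)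
  hence D: "det3 g11 g12 g13 g21 g22 g23 g31 g32 g33 \<noteq> 0" using assms by auto
  have "det3 g11 g12 g13 g21 g22 g23 g31 g32 g33 * dot3 r41 r42 r43 g14 g24 g34 =
     det3 g14 g12 g13 g24 g22 g23 g34 g32 g33 * dot3 r41 r42 r43 g11 g21 g31
   + det3 g11 g14 g13 g21 g24 g23 g31 g34 g33 * dot3 r41 r42 r43 g12 g22 g32
   + det3 g11 g12 g14 g21 g22 g24 g31 g32 g34 * dot3 r41 r42 r43 g13 g23 g33"
    by (rule cramer)
  also have "\<dots> = 0" by (simp only: assms(10) assms(11) assms(12) mult_zero_right add_0)
  finally have "det3 g11 g12 g13 g21 g22 g23 g31 g32 g33 * dot3 r41 r42 r43 g14 g24 g34 = 0" .
  thus False using D assms by simp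
qed

lemma fr_nz: "z \<noteq> 0 \<Longrightarrow> fr q k (z::'a::field) \<noteq> 0"
  unfolding fr_def by simp

lemma Phi_lin:
  assumes F: "\<forall>k (x::'a::field) y. (x + y) ^ (q ^ k) = x ^ (q ^ k) + y ^ (q ^ k)"
    and "a ^ q = a" "b ^ q = b" "c ^ q = (c::'a)"
  shows "Phi q al be ga (vadd (vsc a w1) (vadd (vsc b w2) (vsc c w3)))
     = dot3 a b c (Phi q al be ga w1) (Phi q al be ga w2) (Phi q al be ga w3)"
  unfolding Phi_def vadd_def vsc_def prod.sel dot3_def
  apply (simp only: fr_add[OF F] fr_mult fr_Fq[OF assms(2)] fr_Fq[OF assms(3)] fr_Fq[OF assms(4)])
  by (simp add: algebra_simps)

lemma Psi_val:
  assumes F: "\<forall>k (x::'a::{finite,field}) y. (x + y) ^ (q ^ k) = x ^ (q ^ k) + y ^ (q ^ k)"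
    and P: "\<forall>x::'a. x ^ (q ^ 6) = x" and x: "x \<noteq> 0"
  shows "Phi q a (b ^ (q^2)) (c ^ (q^4)) (vV q (x::'a)) =
      ((a - x^q/x) * x) * fr q 2 ((b - x^q/x) * x) * fr q 4 ((c - x^q/x) * x)"
proof -
  have xq: "(a - x^q/x) * x = a*x - x^q" for a using x by (simp add: field_simps)
  have q3: "q * q^2 = q^3" and q5: "q * q^4 = q^5" by (simp_all add: eval_nat_numeral)
  have f2: "fr q 2 (x^q) = x^(q^3)" unfolding fr_def power_mult[symmetric] q3 ..
  have f4: "fr q 4 (x^q) = x^(q^5)" unfolding fr_def power_mult[symmetric] q5 ..
  have "fr q 2 (b*x - x^q) = b^(q^2)*x^(q^2) - x^(q^3)"
    unfolding fr_diff[OF F] fr_mult f2 by (simp add: fr_def)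
  moreover have "fr q 4 (c*x - x^q) = c^(q^4)*x^(q^4) - x^(q^5)"
    unfolding fr_diff[OF F] fr_mult f4 by (simp add: fr_def)
  ultimately show ?thesis unfolding xq Phi_vV[OF P] by simp
qed

lemma fr_zero: "q > 0 \<Longrightarrow> fr q k (0::'a::field) = 0"
  unfolding fr_def by simp

lemma Psi_zero:
  assumes F: "\<forall>k (x::'a::{finite,field}) y. (x + y) ^ (q ^ k) = x ^ (q ^ k) + y ^ (q ^ k)"
    and P: "\<forall>x::'a. x ^ (q ^ 6) = x" and x: "x \<noteq> 0" and q: "q > 0"
  shows "Phi q a (b ^ (q^2)) (c ^ (q^4)) (vV q (x::'a)) = 0 \<longleftrightarrow>
     (a = x^q/x \<or> b = x^q/x \<or> c = x^q/x)"
proof -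
  have "((a - x^q/x) * x) * fr q 2 ((b - x^q/x) * x) * fr q 4 ((c - x^q/x) * x) = 0 \<longleftrightarrow>
     (a = x^q/x \<or> b = x^q/x \<or> c = x^q/x)"
  proof
    assume h: "((a - x^q/x) * x) * fr q 2 ((b - x^q/x) * x) * fr q 4 ((c - x^q/x) * x) = 0"
    show "a = x^q/x \<or> b = x^q/x \<or> c = x^q/x"
    proof (rule ccontr)
      assume "\<not> ?thesis"
      hence "(a - x^q/x) * x \<noteq> 0" "(b - x^q/x) * x \<noteq> 0" "(c - x^q/x) * x \<noteq> 0"
        using x by auto
      hence "fr q 2 ((b - x^q/x) * x) \<noteq> 0" "fr q 4 ((c - x^q/x) * x) \<noteq> 0"
        "(a - x^q/x) * x \<noteq> 0" using fr_nz by blast+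
      thus False using h by simp
    qed
  next
    assume "a = x^q/x \<or> b = x^q/x \<or> c = x^q/x"
    thus "((a - x^q/x) * x) * fr q 2 ((b - x^q/x) * x) * fr q 4 ((c - x^q/x) * x) = 0"
    proof -
      have z: "fr q 2 (0::'a) = 0" "fr q 4 (0::'a) = 0" using fr_zero[OF q] by blast+
      show ?thesis using \<open>a = x^q/x \<or> b = x^q/x \<or> c = x^q/x\<close> by (elim disjE) (simp_all add: z)
    qed
  qed
  thus ?thesis unfolding Psi_val[OF F P x] .
qed

lemma point_eq:
  assumes F: "\<forall>k (x::'a::{finite,field}) y. (x + y) ^ (q ^ k) = x ^ (q ^ k) + y ^ (q ^ k)"
    and t: "t ^ q = t" "t \<noteq> (0::'a)"
  shows "point q (vV q (t * y)) = point q (vV q y)"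
proof -
  have tk: "t ^ (q ^ k) = t" for k using fr_Fq[OF t(1), of k] by (simp add: fr_def)
  have pw: "t ^ (q ^ a + q ^ b + 1) = t ^ 3" for a b
    by (simp only: power_add tk power_one_right) (simp add: power3_eq_cube)
  have pw2: "t ^ (q ^ a + q + 1) = t ^ 3" for a using pw[of a 1] by simp
  have v: "vV q (t * y) = vsc (t ^ 3) (vV q y)"
    unfolding vV_def vsc_def by (simp only: power_mult_distrib pw pw2 prod.sel)
  have t3: "(t ^ 3) ^ q = t ^ 3" by (metis power_mult power_mult_distrib mult.commute t(1))
  have vv: "vsc c (vsc d w) = vsc (c * d) w" for c d w
    by (simp add: vsc_def mult.assoc)
  show ?thesis
  proof
    show "point q (vV q (t * y)) \<subseteq> point q (vV q y)"
    proof
      fix z assume "z \<in> point q (vV q (t * y))"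
      then obtain c where c: "c ^ q = c" "z = vsc c (vsc (t^3) (vV q y))"
        unfolding point_def Fq_def v by blast
      have "(c * t^3) ^ q = c * t^3" using c t3 by (simp add: power_mult_distrib)
      thus "z \<in> point q (vV q y)" unfolding point_def Fq_def using c vv by blast
    qed
  next
    show "point q (vV q y) \<subseteq> point q (vV q (t * y))"
    proof
      fix z assume "z \<in> point q (vV q y)"
      then obtain c where c: "c ^ q = c" "z = vsc c (vV q y)"
        unfolding point_def Fq_def by blast
      have "(c / t^3) ^ q = c / t^3" using c t3 by (simp add: power_divide)
      moreover have "z = vsc (c / t^3) (vsc (t^3) (vV q y))" using c(2) t(2) by (simp add: vv)
      ultimately show "z \<in> point q (vV q (t * y))" unfolding point_def Fq_def v by blast
    qed
  qed
qed

lemma u_distinct: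
  assumes F: "\<forall>k (x::'a::{finite,field}) y. (x + y) ^ (q ^ k) = x ^ (q ^ k) + y ^ (q ^ k)"
    and "x \<noteq> 0" "y \<noteq> (0::'a)" "point q (vV q x) \<noteq> point q (vV q y)"
  shows "x ^ q / x \<noteq> y ^ q / y"
proof
  assume e: "x ^ q / x = y ^ q / y"
  define t where "t = x / y"
  have e2: "x ^ q * y = y ^ q * x" using e assms(2,3) by (simp add: frac_eq_eq)
  have "t ^ q = t" unfolding t_def power_divide using e2 assms(2,3)
    by (simp add: frac_eq_eq mult.commute)
  moreover have "t \<noteq> 0" using assms(2,3) by (simp add: t_def)
  ultimately have "point q (vV q (t * y)) = point q (vV q y)" by (rule point_eq[OF F])
  moreover have "t * y = x" using assms(3) by (simp add: t_def)
  ultimately show False using assms(4) by simp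
qed



lemma gen:
  assumes F: "\<forall>k (x::'a::{finite,field}) y. (x + y) ^ (q ^ k) = x ^ (q ^ k) + y ^ (q ^ k)"
    and P: "\<forall>x::'a. x ^ (q ^ 6) = x" and q: "q > 0"
    and x: "x \<noteq> 0" and abc: "a ^ q = a" "b ^ q = b" "c ^ q = c"
    and v: "vV q x = vadd (vsc a w1) (vadd (vsc b w2) (vsc c w3))"
  shows "(dot3 a b c (Phi q al (be^(q^2)) (ga^(q^4)) w1) (Phi q al (be^(q^2)) (ga^(q^4)) w2)
            (Phi q al (be^(q^2)) (ga^(q^4)) w3) = 0) = (al = x^q/x \<or> be = x^q/x \<or> ga = x^q/(x::'a))"
  unfolding Phi_lin[OF F abc, symmetric] v[symmetric] by (rule Psi_zero[OF F P x q])

lemma inpt: "(v::'a::{finite,field} vec3) \<in> point q v"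
proof -
  have "v = vsc 1 v" by (simp add: vsc_def)
  moreover have "(1::'a) \<in> Fq q" by (simp add: Fq_def)
  ultimately show ?thesis unfolding point_def by blast
qed

theorem mainTheorem19:
  fixes q :: nat
  assumes "\<exists>p n. prime p \<and> n > 0 \<and> q = p ^ n"
    and "card (UNIV :: 'a::{finite,field} set) = q ^ 6"
  shows "\<forall>P1\<in>Vpts q. \<forall>P2\<in>Vpts q. \<forall>P3\<in>Vpts q. \<forall>P4\<in>Vpts q.
           distinct [P1, P2, P3, P4] \<longrightarrow>
           \<not> (\<exists>\<Pi>::'a vec3 set. is_plane q \<Pi> \<and> P1 \<union> P2 \<union> P3 \<union> P4 \<subseteq> \<Pi>)"
proof -
  note SF = setup_facts[OF assms]
  have F: "\<forall>k (x::'a) y. (x + y) ^ (q ^ k) = x ^ (q ^ k) + y ^ (q ^ k)" by (rule SF(1))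
  have P: "\<forall>x::'a. x ^ (q ^ 6) = x" by (rule SF(2))
  have q: "q > 0" using assms(1) prime_gt_0_nat by auto
  define u :: "'a \<Rightarrow> 'a" where "u x = x ^ q / x" for x
  show ?thesis
  proof (intro ballI impI notI)
    fix P1 P2 P3 P4 :: "'a vec3 set"
    assume h: "P1 \<in> Vpts q" "P2 \<in> Vpts q" "P3 \<in> Vpts q" "P4 \<in> Vpts q"
      and dist: "distinct [P1, P2, P3, P4]"
      and ex: "\<exists>\<Pi>::'a vec3 set. is_plane q \<Pi> \<and> P1 \<union> P2 \<union> P3 \<union> P4 \<subseteq> \<Pi>"
    obtain x1 where x1: "x1 \<noteq> 0" "P1 = point q (vV q x1)" using h(1) unfolding Vpts_def by blast
    obtain x2 where x2: "x2 \<noteq> 0" "P2 = point q (vV q x2)" using h(2) unfolding Vpts_def by blast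
    obtain x3 where x3: "x3 \<noteq> 0" "P3 = point q (vV q x3)" using h(3) unfolding Vpts_def by blast
    obtain x4 where x4: "x4 \<noteq> 0" "P4 = point q (vV q x4)" using h(4) unfolding Vpts_def by blast
    obtain Pi where Pi: "is_plane q Pi" "P1 \<union> P2 \<union> P3 \<union> P4 \<subseteq> Pi" using ex by blast
    then obtain w1 w2 w3 where Pd: "Pi = {vadd (vsc a w1) (vadd (vsc b w2) (vsc c w3)) | a b c.
              a \<in> Fq q \<and> b \<in> Fq q \<and> c \<in> Fq q}" unfolding is_plane_def by blast
    have "vV q x1 \<in> Pi" using Pi(2) x1(2) inpt by blast
    then obtain a1 b1 c1 where ab1: "a1 ^ q = a1" "b1 ^ q = b1" "c1 ^ q = c1"
      and v1: "vV q x1 = vadd (vsc a1 w1) (vadd (vsc b1 w2) (vsc c1 w3))"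
      unfolding Pd Fq_def by blast
    have "vV q x2 \<in> Pi" using Pi(2) x2(2) inpt by blast
    then obtain a2 b2 c2 where ab2: "a2 ^ q = a2" "b2 ^ q = b2" "c2 ^ q = c2"
      and v2: "vV q x2 = vadd (vsc a2 w1) (vadd (vsc b2 w2) (vsc c2 w3))"
      unfolding Pd Fq_def by blast
    have "vV q x3 \<in> Pi" using Pi(2) x3(2) inpt by blast
    then obtain a3 b3 c3 where ab3: "a3 ^ q = a3" "b3 ^ q = b3" "c3 ^ q = c3"
      and v3: "vV q x3 = vadd (vsc a3 w1) (vadd (vsc b3 w2) (vsc c3 w3))"
      unfolding Pd Fq_def by blast
    have "vV q x4 \<in> Pi" using Pi(2) x4(2) inpt by blast
    then obtain a4 b4 c4 where ab4: "a4 ^ q = a4" "b4 ^ q = b4" "c4 ^ q = c4"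
      and v4: "vV q x4 = vadd (vsc a4 w1) (vadd (vsc b4 w2) (vsc c4 w3))"
      unfolding Pd Fq_def by blast
    have d12: "u x1 \<noteq> u x2" unfolding u_def
      by (rule u_distinct[OF F x1(1) x2(1)]) (use dist x1(2) x2(2) in auto)
    have d13: "u x1 \<noteq> u x3" unfolding u_def
      by (rule u_distinct[OF F x1(1) x3(1)]) (use dist x1(2) x3(2) in auto)
    have d14: "u x1 \<noteq> u x4" unfolding u_def
      by (rule u_distinct[OF F x1(1) x4(1)]) (use dist x1(2) x4(2) in auto)
    have d23: "u x2 \<noteq> u x3" unfolding u_def
      by (rule u_distinct[OF F x2(1) x3(1)]) (use dist x2(2) x3(2) in auto)
    have d24: "u x2 \<noteq> u x4" unfolding u_def
      by (rule u_distinct[OF F x2(1) x4(1)]) (use dist x2(2) x4(2) in auto)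
    have d34: "u x3 \<noteq> u x4" unfolding u_def
      by (rule u_distinct[OF F x3(1) x4(1)]) (use dist x3(2) x4(2) in auto)
    have f11: "dot3 a1 b1 c1 (Phi q (u x4) ((u x3)^(q^2)) ((u x2)^(q^4)) w1) (Phi q (u x4) ((u x3)^(q^2)) ((u x2)^(q^4)) w2) (Phi q (u x4) ((u x3)^(q^2)) ((u x2)^(q^4)) w3) \<noteq> 0"
      unfolding gen[OF F P q x1(1) ab1 v1] u_def[symmetric] using d12 d13 d14 d23 d24 d34 by auto
    have f12: "dot3 a1 b1 c1 (Phi q (u x1) ((u x3)^(q^2)) ((u x4)^(q^4)) w1) (Phi q (u x1) ((u x3)^(q^2)) ((u x4)^(q^4)) w2) (Phi q (u x1) ((u x3)^(q^2)) ((u x4)^(q^4)) w3) = 0"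
      unfolding gen[OF F P q x1(1) ab1 v1] u_def[symmetric] using d12 d13 d14 d23 d24 d34 by auto
    have f13: "dot3 a1 b1 c1 (Phi q (u x1) ((u x2)^(q^2)) ((u x4)^(q^4)) w1) (Phi q (u x1) ((u x2)^(q^2)) ((u x4)^(q^4)) w2) (Phi q (u x1) ((u x2)^(q^2)) ((u x4)^(q^4)) w3) = 0"
      unfolding gen[OF F P q x1(1) ab1 v1] u_def[symmetric] using d12 d13 d14 d23 d24 d34 by auto
    have f21: "dot3 a2 b2 c2 (Phi q (u x4) ((u x3)^(q^2)) ((u x2)^(q^4)) w1) (Phi q (u x4) ((u x3)^(q^2)) ((u x2)^(q^4)) w2) (Phi q (u x4) ((u x3)^(q^2)) ((u x2)^(q^4)) w3) = 0"
      unfolding gen[OF F P q x2(1) ab2 v2] u_def[symmetric] using d12 d13 d14 d23 d24 d34 by auto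
    have f22: "dot3 a2 b2 c2 (Phi q (u x1) ((u x3)^(q^2)) ((u x4)^(q^4)) w1) (Phi q (u x1) ((u x3)^(q^2)) ((u x4)^(q^4)) w2) (Phi q (u x1) ((u x3)^(q^2)) ((u x4)^(q^4)) w3) \<noteq> 0"
      unfolding gen[OF F P q x2(1) ab2 v2] u_def[symmetric] using d12 d13 d14 d23 d24 d34 by auto
    have f23: "dot3 a2 b2 c2 (Phi q (u x1) ((u x2)^(q^2)) ((u x4)^(q^4)) w1) (Phi q (u x1) ((u x2)^(q^2)) ((u x4)^(q^4)) w2) (Phi q (u x1) ((u x2)^(q^2)) ((u x4)^(q^4)) w3) = 0"
      unfolding gen[OF F P q x2(1) ab2 v2] u_def[symmetric] using d12 d13 d14 d23 d24 d34 by auto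
    have f31: "dot3 a3 b3 c3 (Phi q (u x4) ((u x3)^(q^2)) ((u x2)^(q^4)) w1) (Phi q (u x4) ((u x3)^(q^2)) ((u x2)^(q^4)) w2) (Phi q (u x4) ((u x3)^(q^2)) ((u x2)^(q^4)) w3) = 0"
      unfolding gen[OF F P q x3(1) ab3 v3] u_def[symmetric] using d12 d13 d14 d23 d24 d34 by auto
    have f32: "dot3 a3 b3 c3 (Phi q (u x1) ((u x3)^(q^2)) ((u x4)^(q^4)) w1) (Phi q (u x1) ((u x3)^(q^2)) ((u x4)^(q^4)) w2) (Phi q (u x1) ((u x3)^(q^2)) ((u x4)^(q^4)) w3) = 0"
      unfolding gen[OF F P q x3(1) ab3 v3] u_def[symmetric] using d12 d13 d14 d23 d24 d34 by auto
    have f33: "dot3 a3 b3 c3 (Phi q (u x1) ((u x2)^(q^2)) ((u x4)^(q^4)) w1) (Phi q (u x1) ((u x2)^(q^2)) ((u x4)^(q^4)) w2) (Phi q (u x1) ((u x2)^(q^2)) ((u x4)^(q^4)) w3) \<noteq> 0"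
      unfolding gen[OF F P q x3(1) ab3 v3] u_def[symmetric] using d12 d13 d14 d23 d24 d34 by auto
    have f41: "dot3 a4 b4 c4 (Phi q (u x4) ((u x3)^(q^2)) ((u x2)^(q^4)) w1) (Phi q (u x4) ((u x3)^(q^2)) ((u x2)^(q^4)) w2) (Phi q (u x4) ((u x3)^(q^2)) ((u x2)^(q^4)) w3) = 0"
      unfolding gen[OF F P q x4(1) ab4 v4] u_def[symmetric] using d12 d13 d14 d23 d24 d34 by auto
    have f42: "dot3 a4 b4 c4 (Phi q (u x1) ((u x3)^(q^2)) ((u x4)^(q^4)) w1) (Phi q (u x1) ((u x3)^(q^2)) ((u x4)^(q^4)) w2) (Phi q (u x1) ((u x3)^(q^2)) ((u x4)^(q^4)) w3) = 0"
      unfolding gen[OF F P q x4(1) ab4 v4] u_def[symmetric] using d12 d13 d14 d23 d24 d34 by auto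
    have f43: "dot3 a4 b4 c4 (Phi q (u x1) ((u x2)^(q^2)) ((u x4)^(q^4)) w1) (Phi q (u x1) ((u x2)^(q^2)) ((u x4)^(q^4)) w2) (Phi q (u x1) ((u x2)^(q^2)) ((u x4)^(q^4)) w3) = 0"
      unfolding gen[OF F P q x4(1) ab4 v4] u_def[symmetric] using d12 d13 d14 d23 d24 d34 by auto
    have f44: "dot3 a4 b4 c4 (Phi q (u x1) ((u x2)^(q^2)) ((u x3)^(q^4)) w1) (Phi q (u x1) ((u x2)^(q^2)) ((u x3)^(q^4)) w2) (Phi q (u x1) ((u x2)^(q^2)) ((u x3)^(q^4)) w3) \<noteq> 0"
      unfolding gen[OF F P q x4(1) ab4 v4] u_def[symmetric] using d12 d13 d14 d23 d24 d34 by auto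
    show False by (rule no4[OF f11 f12 f13 f21 f22 f23 f31 f32 f33 f41 f42 f43 f44])
  qed
qed


end
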